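(* Let $(X,d)$ be a complete metric space, $\lambda$ a convex mean on $X$ and $\nu$ a nonexpansive 2-mean on $X$. Then the iterated composition $\lambda*\nu$ (resp. the skewed iterated composition $\lambda*_s\nu$) exists and is nonexpansive.
   Context: A 2-mean is a map $\mu:X^2\to X$ with $\mu(x,x)=x$. A convex mean is a symmetric 2-mean $\lambda$ with $d(\lambda(x,z),\lambda(y,z))\le\frac12 d(x,y)$ for all $x,y,z$. Nonexpansive: $d(\nu(x_1,x_2),\nu(y_1,y_2))\le\max\{d(x_1,y_1),d(x_2,y_2)\}$. Iterated composition: set $\lambda_1=\lambda$, $\nu_1=\nu$, $\lambda_{n+1}(x,y)=\lambda(\lambda_n(x,y),\nu_n(x,y))$, $\nu_{n+1}(x,y)=\nu(\lambda_n(x,y),\nu_n(x,y))$; skewed iterated composition: $\nu_{n+1}(x,y)=\nu(\lambda_n(x,y),\nu_n(x,y))$, $\lambda_{n+1}(x,y)=\lambda(\lambda_n(x,y),\nu_{n+1}(x,y))$. If there is a 2-mean $\mu$ with $\lim_n\lambda_n(x,y)=\mu(x,y)=\lim_n\nu_n(x,y)$ for all $x,y$, then $\mu$ is the iterated composition $\lambda*\nu$ (resp. skewed iterated composition $\lambda*_s\nu$). *)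

theory Defs
  imports "HOL-Analysis.Analysis"
begin

definition mean2 :: "('a \<Rightarrow> 'a \<Rightarrow> 'a) \<Rightarrow> bool" where
  "mean2 mu \<longleftrightarrow> (\<forall>x. mu x x = x)"

definition convex_mean :: "('a::metric_space \<Rightarrow> 'a \<Rightarrow> 'a) \<Rightarrow> bool" where
  "convex_mean lam \<longleftrightarrow> mean2 lam \<and> (\<forall>x y. lam x y = lam y x) \<and>
     (\<forall>x y z. dist (lam x z) (lam y z) \<le> dist x y / 2)"

definition nonexpansive2 :: "('a::metric_space \<Rightarrow> 'a \<Rightarrow> 'a) \<Rightarrow> bool" where
  "nonexpansive2 nu \<longleftrightarrow> (\<forall>x1 x2 y1 y2.
     dist (nu x1 x2) (nu y1 y2) \<le> max (dist x1 y1) (dist x2 y2))"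

text \<open>Index shift: iter_pair lam nu n x y = (lambda_{n+1}(x,y), nu_{n+1}(x,y)).\<close>
fun iter_pair :: "('a \<Rightarrow> 'a \<Rightarrow> 'a) \<Rightarrow> ('a \<Rightarrow> 'a \<Rightarrow> 'a) \<Rightarrow> nat \<Rightarrow> 'a \<Rightarrow> 'a \<Rightarrow> 'a \<times> 'a" where
  "iter_pair lam nu 0 x y = (lam x y, nu x y)"
| "iter_pair lam nu (Suc n) x y =
     (let (l, v) = iter_pair lam nu n x y in (lam l v, nu l v))"

fun skew_iter_pair :: "('a \<Rightarrow> 'a \<Rightarrow> 'a) \<Rightarrow> ('a \<Rightarrow> 'a \<Rightarrow> 'a) \<Rightarrow> nat \<Rightarrow> 'a \<Rightarrow> 'a \<Rightarrow> 'a \<times> 'a" where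
  "skew_iter_pair lam nu 0 x y = (lam x y, nu x y)"
| "skew_iter_pair lam nu (Suc n) x y =
     (let (l, v) = skew_iter_pair lam nu n x y; v' = nu l v in (lam l v', v'))"

definition is_iter_comp :: "('a::metric_space \<Rightarrow> 'a \<Rightarrow> 'a) \<Rightarrow> ('a \<Rightarrow> 'a \<Rightarrow> 'a) \<Rightarrow> ('a \<Rightarrow> 'a \<Rightarrow> 'a) \<Rightarrow> bool" where
  "is_iter_comp lam nu mu \<longleftrightarrow> mean2 mu \<and> (\<forall>x y.
     (\<lambda>n. fst (iter_pair lam nu n x y)) \<longlonglongrightarrow> mu x y \<and>
     (\<lambda>n. snd (iter_pair lam nu n x y)) \<longlonglongrightarrow> mu x y)"

definition is_skew_iter_comp :: "('a::metric_space \<Rightarrow> 'a \<Rightarrow> 'a) \<Rightarrow> ('a \<Rightarrow> 'a \<Rightarrow> 'a) \<Rightarrow> ('a \<Rightarrow> 'a \<Rightarrow> 'a) \<Rightarrow> bool" where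
  "is_skew_iter_comp lam nu mu \<longleftrightarrow> mean2 mu \<and> (\<forall>x y.
     (\<lambda>n. fst (skew_iter_pair lam nu n x y)) \<longlonglongrightarrow> mu x y \<and>
     (\<lambda>n. snd (skew_iter_pair lam nu n x y)) \<longlonglongrightarrow> mu x y)"

end

theory Submission
  imports Defs
begin

lemma geo_conv:
  fixes l v :: "nat \<Rightarrow> 'a::complete_space"
  assumes s1: "\<And>n. dist (l (Suc n)) (l n) \<le> dist (l n) (v n) / 2"
    and s2: "\<And>n. dist (l (Suc n)) (v (Suc n)) \<le> dist (l n) (v n) / 2"
  shows "\<exists>L. l \<longlonglongrightarrow> L \<and> v \<longlonglongrightarrow> L"
proof -
  define D0 where "D0 = dist (l 0) (v 0)"
  have D0: "D0 \<ge> 0" by (simp add: D0_def)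
  have Dn: "dist (l n) (v n) \<le> D0 / 2 ^ n" for n
  proof (induction n)
    case 0 then show ?case by (simp add: D0_def)
  next
    case (Suc n)
    have "dist (l (Suc n)) (v (Suc n)) \<le> dist (l n) (v n) / 2" by (rule s2)
    also have "\<dots> \<le> D0 / 2 ^ n / 2" using Suc by simp
    finally show ?case by simp
  qed
  have step: "dist (l n) (l (Suc n)) \<le> D0 / 2 ^ Suc n" for n
    using s1[of n] Dn[of n] by (simp add: dist_commute)
  have dk: "dist (l n) (l (n + k)) \<le> D0 * (1 / 2 ^ n - 1 / 2 ^ (n + k))" for n k
  proof (induction k)
    case 0 then show ?case by simp
  next
    case (Suc k)
    have "dist (l n) (l (n + Suc k)) \<le> dist (l n) (l (n + k)) + dist (l (n + k)) (l (Suc (n + k)))"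
      using dist_triangle by simp
    also have "\<dots> \<le> D0 * (1 / 2 ^ n - 1 / 2 ^ (n + k)) + D0 / 2 ^ Suc (n + k)"
      using Suc step[of "n + k"] by linarith
    also have "\<dots> = D0 * (1 / 2 ^ n - 1 / 2 ^ (n + Suc k))"
      by (simp add: field_simps)
    finally show ?case .
  qed
  have dk2: "dist (l n) (l (n + k)) \<le> D0 / 2 ^ n" for n k
  proof -
    have "D0 * (1 / 2 ^ n - 1 / 2 ^ (n + k)) \<le> D0 * (1 / 2 ^ n)"
      using D0 by (intro mult_left_mono) auto
    then show ?thesis using dk[of n k] by simp
  qed
  have lim0: "(\<lambda>n. D0 / 2 ^ n) \<longlonglongrightarrow> 0"
    by (intro LIMSEQ_divide_realpow_zero) auto
  have "Cauchy l"
  proof (rule metric_CauchyI)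
    fix e :: real assume e: "0 < e"
    have "\<exists>N. \<forall>n\<ge>N. dist (D0 / 2 ^ n) 0 < e"
      using metric_LIMSEQ_D[OF lim0, of e] e by simp
    then obtain N where N': "\<And>n. n \<ge> N \<Longrightarrow> dist (D0 / 2 ^ n) 0 < e" by blast
    have N: "D0 / 2 ^ n < e" if "n \<ge> N" for n
      using N'[OF that] D0 by (simp add: dist_real_def)
    have "dist (l m) (l n) < e" if "m \<ge> N" "n \<ge> N" for m n
    proof (cases "m \<le> n")
      case True
      have "dist (l m) (l (m + (n - m))) \<le> D0 / 2 ^ m" by (rule dk2)
      then show ?thesis using True N[OF that(1)] by simp
    next
      case False
      have "dist (l n) (l (n + (m - n))) \<le> D0 / 2 ^ n" by (rule dk2)
      then show ?thesis using False N[OF that(2)] by (simp add: dist_commute)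
    qed
    then show "\<exists>M. \<forall>m\<ge>M. \<forall>n\<ge>M. dist (l m) (l n) < e" by blast
  qed
  then obtain L where L: "l \<longlonglongrightarrow> L" using Cauchy_convergent_iff convergent_def by blast
  have "v \<longlonglongrightarrow> L"
  proof (rule metric_LIMSEQ_I)
    fix e :: real assume e: "0 < e"
    obtain N1 where N1: "\<And>n. n \<ge> N1 \<Longrightarrow> dist (l n) L < e / 2"
      using metric_LIMSEQ_D[OF L, of "e/2"] e by auto
    have "\<exists>N. \<forall>n\<ge>N. dist (D0 / 2 ^ n) 0 < e / 2"
      using metric_LIMSEQ_D[OF lim0, of "e/2"] e by simp
    then obtain N2 where N2': "\<And>n. n \<ge> N2 \<Longrightarrow> dist (D0 / 2 ^ n) 0 < e / 2" by blast
    have N2: "D0 / 2 ^ n < e / 2" if "n \<ge> N2" for n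
      using N2'[OF that] D0 by (simp add: dist_real_def)
    have "dist (v n) L < e" if "n \<ge> max N1 N2" for n
    proof -
      have "dist (v n) L \<le> dist (v n) (l n) + dist (l n) L" by (rule dist_triangle)
      also have "\<dots> < e / 2 + e / 2"
      proof -
        have a: "dist (v n) (l n) < e / 2"
        proof -
          have "D0 / 2 ^ n < e / 2" using N2[of n] that by simp
          then show ?thesis using Dn[of n] dist_commute[of "v n" "l n"] by linarith
        qed
        have b: "dist (l n) L < e / 2" using N1[of n] that by simp
        show ?thesis using a b by linarith
      qed
      finally show ?thesis by simp
    qed
    then show "\<exists>N. \<forall>n\<ge>N. dist (v n) L < e" by blast
  qed
  with L show ?thesis by blast
qed

lemma lam_nonexp:
  assumes "convex_mean lam"
  shows "dist (lam a b) (lam c d) \<le> max (dist a c) (dist b d)"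
proof -
  have sym: "\<And>x y. lam x y = lam y x" and h: "\<And>x y z. dist (lam x z) (lam y z) \<le> dist x y / 2"
    using assms unfolding convex_mean_def by auto
  have "dist (lam a b) (lam c d) \<le> dist (lam a b) (lam c b) + dist (lam c b) (lam c d)"
    by (rule dist_triangle)
  also have "dist (lam c b) (lam c d) \<le> dist b d / 2" using h[where x=b and y=d and z=c] sym[of c b] sym[of c d] by simp
  finally show ?thesis using h[where x=a and y=c and z=b] by linarith
qed

lemma factA:
  assumes "convex_mean lam"
  shows "dist (lam l v) l \<le> dist l v / 2"
proof -
  have sym: "\<And>x y. lam x y = lam y x" and h: "\<And>x y z. dist (lam x z) (lam y z) \<le> dist x y / 2"
    and m: "\<And>x. lam x x = x"
    using assms unfolding convex_mean_def mean2_def by auto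
  show ?thesis using h[of v l l] sym[of l v] m[of l] by (simp add: dist_commute)
qed

lemma factB:
  assumes "convex_mean lam"
  shows "dist (lam l v) v \<le> dist l v / 2"
proof -
  have h: "\<And>x y z. dist (lam x z) (lam y z) \<le> dist x y / 2"
    and m: "\<And>x. lam x x = x"
    using assms unfolding convex_mean_def mean2_def by auto
  show ?thesis using h[of l v v] m[of v] by simp
qed

lemma factC:
  assumes "convex_mean lam" "mean2 nu" "nonexpansive2 nu"
  shows "dist (nu l v) (lam l v) \<le> dist l v / 2"
proof -
  have "dist (nu l v) (nu (lam l v) (lam l v)) \<le> max (dist l (lam l v)) (dist v (lam l v))"
    using assms(3) unfolding nonexpansive2_def by blast
  moreover have "nu (lam l v) (lam l v) = lam l v" using assms(2) unfolding mean2_def by auto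
  ultimately show ?thesis using factA[OF assms(1), of l v] factB[OF assms(1), of l v]
    by (simp add: dist_commute)
qed

lemma factD:
  assumes "mean2 nu" "nonexpansive2 nu"
  shows "dist l (nu l v) \<le> dist l v"
proof -
  have "dist (nu l l) (nu l v) \<le> max (dist l l) (dist l v)"
    using assms(2) unfolding nonexpansive2_def by blast
  moreover have "nu l l = l" using assms(1) unfolding mean2_def by auto
  ultimately show ?thesis by simp
qed

lemma iter_Suc: "iter_pair lam nu (Suc n) x y =
   (lam (fst (iter_pair lam nu n x y)) (snd (iter_pair lam nu n x y)),
    nu (fst (iter_pair lam nu n x y)) (snd (iter_pair lam nu n x y)))"
  by (simp add: split_beta)

lemma skew_Suc: "skew_iter_pair lam nu (Suc n) x y =
   (lam (fst (skew_iter_pair lam nu n x y)) (nu (fst (skew_iter_pair lam nu n x y)) (snd (skew_iter_pair lam nu n x y))),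
    nu (fst (skew_iter_pair lam nu n x y)) (snd (skew_iter_pair lam nu n x y)))"
  by (simp add: split_beta Let_def)

lemma limit_nonexp:
  fixes f g :: "nat \<Rightarrow> 'a::metric_space"
  assumes "f \<longlonglongrightarrow> a" "g \<longlonglongrightarrow> b" "\<And>n. dist (f n) (g n) \<le> M"
  shows "dist a b \<le> M"
proof -
  have "(\<lambda>n. dist (f n) (g n)) \<longlonglongrightarrow> dist a b" using assms by (intro tendsto_dist)
  then show ?thesis using assms(3) by (intro tendsto_upperbound) auto
qed

theorem proposition6p3:
  fixes lam nu :: "'a::complete_space \<Rightarrow> 'a \<Rightarrow> 'a"
  assumes "convex_mean lam" and "mean2 nu" and "nonexpansive2 nu"
  shows "(\<exists>mu. is_iter_comp lam nu mu \<and> nonexpansive2 mu) \<and>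
         (\<exists>mu. is_skew_iter_comp lam nu mu \<and> nonexpansive2 mu)"
proof
  have lm: "\<And>x. lam x x = x" using assms(1) unfolding convex_mean_def mean2_def by auto
  have nm: "\<And>x. nu x x = x" using assms(2) unfolding mean2_def by auto
  have nne: "\<And>a b c d. dist (nu a b) (nu c d) \<le> max (dist a c) (dist b d)"
    using assms(3) unfolding nonexpansive2_def by blast
  note lne = lam_nonexp[OF assms(1)]
  show "\<exists>mu. is_iter_comp lam nu mu \<and> nonexpansive2 mu"
  proof -
    let ?l = "\<lambda>x y n. fst (iter_pair lam nu n x y)"
    let ?v = "\<lambda>x y n. snd (iter_pair lam nu n x y)"
    have ex: "\<exists>L. ?l x y \<longlonglongrightarrow> L \<and> ?v x y \<longlonglongrightarrow> L" for x y
    proof (rule geo_conv)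
      fix n
      show "dist (?l x y (Suc n)) (?l x y n) \<le> dist (?l x y n) (?v x y n) / 2"
        unfolding iter_Suc using factA[OF assms(1)] by simp
      show "dist (?l x y (Suc n)) (?v x y (Suc n)) \<le> dist (?l x y n) (?v x y n) / 2"
        unfolding iter_Suc using factC[OF assms] by (simp add: dist_commute)
    qed
    define mu where "mu x y = lim (?l x y)" for x y
    have lims: "?l x y \<longlonglongrightarrow> mu x y \<and> ?v x y \<longlonglongrightarrow> mu x y" for x y
      using ex[of x y] unfolding mu_def by (metis limI)
    have diag: "?l x x n = x \<and> ?v x x n = x" for x n
      by (induction n) (simp_all del: iter_pair.simps add: iter_pair.simps(1) iter_Suc lm nm)
    have "mean2 mu" unfolding mean2_def
    proof
      fix x
      have "?l x x \<longlonglongrightarrow> x" using diag by simp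
      then show "mu x x = x" using lims[of x x] LIMSEQ_unique by blast
    qed
    moreover have "nonexpansive2 mu" unfolding nonexpansive2_def
    proof (intro allI)
      fix x1 x2 y1 y2 :: 'a
      let ?M = "max (dist x1 y1) (dist x2 y2)"
      have b: "dist (?l x1 x2 n) (?l y1 y2 n) \<le> ?M \<and> dist (?v x1 x2 n) (?v y1 y2 n) \<le> ?M" for n
      proof (induction n)
        case 0 then show ?case using lne nne by simp
      next
        case (Suc n)
        then show ?case unfolding iter_Suc fst_conv snd_conv
          using lne[of "?l x1 x2 n" "?v x1 x2 n" "?l y1 y2 n" "?v y1 y2 n"]
            nne[of "?l x1 x2 n" "?v x1 x2 n" "?l y1 y2 n" "?v y1 y2 n"] by linarith
      qed
      show "dist (mu x1 x2) (mu y1 y2) \<le> ?M"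
        using limit_nonexp[OF conjunct1[OF lims] conjunct1[OF lims]] b by blast
    qed
    ultimately show ?thesis unfolding is_iter_comp_def using lims by blast
  qed
  show "\<exists>mu. is_skew_iter_comp lam nu mu \<and> nonexpansive2 mu"
  proof -
    let ?l = "\<lambda>x y n. fst (skew_iter_pair lam nu n x y)"
    let ?v = "\<lambda>x y n. snd (skew_iter_pair lam nu n x y)"
    have ex: "\<exists>L. ?l x y \<longlonglongrightarrow> L \<and> ?v x y \<longlonglongrightarrow> L" for x y
    proof (rule geo_conv)
      fix n
      have d: "dist (?l x y n) (nu (?l x y n) (?v x y n)) \<le> dist (?l x y n) (?v x y n)"
        using factD[OF assms(2,3)] by blast
      show "dist (?l x y (Suc n)) (?l x y n) \<le> dist (?l x y n) (?v x y n) / 2"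
        unfolding skew_Suc using factA[OF assms(1), of "?l x y n" "nu (?l x y n) (?v x y n)"] d by simp
      show "dist (?l x y (Suc n)) (?v x y (Suc n)) \<le> dist (?l x y n) (?v x y n) / 2"
        unfolding skew_Suc using factB[OF assms(1), of "?l x y n" "nu (?l x y n) (?v x y n)"] d by simp
    qed
    define mu where "mu x y = lim (?l x y)" for x y
    have lims: "?l x y \<longlonglongrightarrow> mu x y \<and> ?v x y \<longlonglongrightarrow> mu x y" for x y
      using ex[of x y] unfolding mu_def by (metis limI)
    have diag: "?l x x n = x \<and> ?v x x n = x" for x n
      by (induction n) (simp_all del: skew_iter_pair.simps add: skew_iter_pair.simps(1) skew_Suc lm nm)
    have "mean2 mu" unfolding mean2_def
    proof
      fix x
      have "?l x x \<longlonglongrightarrow> x" using diag by simp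
      then show "mu x x = x" using lims[of x x] LIMSEQ_unique by blast
    qed
    moreover have "nonexpansive2 mu" unfolding nonexpansive2_def
    proof (intro allI)
      fix x1 x2 y1 y2 :: 'a
      let ?M = "max (dist x1 y1) (dist x2 y2)"
      have b: "dist (?l x1 x2 n) (?l y1 y2 n) \<le> ?M \<and> dist (?v x1 x2 n) (?v y1 y2 n) \<le> ?M" for n
      proof (induction n)
        case 0 then show ?case using lne nne by simp
      next
        case (Suc n)
        have v: "dist (nu (?l x1 x2 n) (?v x1 x2 n)) (nu (?l y1 y2 n) (?v y1 y2 n)) \<le> ?M"
          using Suc nne[of "?l x1 x2 n" "?v x1 x2 n" "?l y1 y2 n" "?v y1 y2 n"] by linarith
        show ?case unfolding skew_Suc fst_conv snd_conv
          using v Suc lne[of "?l x1 x2 n" "nu (?l x1 x2 n) (?v x1 x2 n)" "?l y1 y2 n" "nu (?l y1 y2 n) (?v y1 y2 n)"]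
          by linarith
      qed
      show "dist (mu x1 x2) (mu y1 y2) \<le> ?M"
        using limit_nonexp[OF conjunct1[OF lims] conjunct1[OF lims]] b by blast
    qed
    ultimately show ?thesis unfolding is_skew_iter_comp_def using lims by blast
  qed
qed

end
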